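(* Any deterministic scheduler for the serial-parallel scheduling problem on $p$ processors that is both decide-on-arrival and parallel-work-oblivious has awake-time competitive ratio $\Omega(\sqrt{p})$: there is an absolute constant $c>0$ such that for every such scheduler there is a task arrival process on which its awake time is at least $c\sqrt{p}$ times the optimal offline awake time.
   Context: Serial-parallel scheduling problem: $p$ identical processors. A task arrival process is a finite set of tasks $\tau_i=(\sigma_i,\pi_i,t_i)$ with arrival time $t_i\ge0$, serial work $\sigma_i$ and parallel work $\pi_i$, $1\le\pi_i/\sigma_i\le p$. A task is performed either by its serial job (work $\sigma_i$, at most one processor at any instant) or by its parallel job (work $\pi_i$, any number of processors, rate equal to number of processors); time is continuous, allocations may be fractional, preemption is allowed. A task is alive from arrival until completion; awake time is the measure of the set of times at which some task is alive. The optimal offline schedule knows everything in advance. A decide-on-arrival scheduler must decide immediately and irrevocably at each task's arrival which implementation to run. A parallel-work-oblivious scheduler learns each task's arrival time and serial work $\sigma_i$ but never its parallel work $\pi_i$. *)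

theory Defs
  imports "HOL-Analysis.Analysis"
begin

type_synonym task = "real \<times> real \<times> real"

definition ser :: "task \<Rightarrow> real" where "ser \<tau> = fst \<tau>"
definition par :: "task \<Rightarrow> real" where "par \<tau> = fst (snd \<tau>)"
definition arr :: "task \<Rightarrow> real" where "arr \<tau> = snd (snd \<tau>)"

text \<open>A task arrival process is a finite set of tasks, represented as a list
  indexed in nondecreasing order of arrival time.\<close>
definition valid_task :: "nat \<Rightarrow> task \<Rightarrow> bool" where
  "valid_task p \<tau> \<longleftrightarrow> 0 < ser \<tau> \<and> 0 \<le> arr \<tau> \<and>
     1 \<le> par \<tau> / ser \<tau> \<and> par \<tau> / ser \<tau> \<le> real p"

definition valid_instance :: "nat \<Rightarrow> task list \<Rightarrow> bool" where
  "valid_instance p I \<longleftrightarrow> (\<forall>\<tau>\<in>set I. valid_task p \<tau>) \<and> sorted (map arr I)"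

text \<open>A schedule: for each task index, the implementation chosen
  (True = parallel job, False = serial job) and a processor allocation
  (rate) as a function of continuous time.\<close>
type_synonym schedule = "(nat \<Rightarrow> bool) \<times> (nat \<Rightarrow> real \<Rightarrow> real)"

definition choice :: "schedule \<Rightarrow> nat \<Rightarrow> bool" where "choice sch = fst sch"
definition alloc :: "schedule \<Rightarrow> nat \<Rightarrow> real \<Rightarrow> real" where "alloc sch = snd sch"

definition work :: "task list \<Rightarrow> schedule \<Rightarrow> nat \<Rightarrow> real" where
  "work I sch i = (if choice sch i then par (I ! i) else ser (I ! i))"

definition done_by :: "task list \<Rightarrow> schedule \<Rightarrow> nat \<Rightarrow> real \<Rightarrow> bool" where
  "done_by I sch i T \<longleftrightarrow> arr (I ! i) \<le> T \<and>
     work I sch i \<le> integral {arr (I ! i)..T} (alloc sch i)"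

definition completion :: "task list \<Rightarrow> schedule \<Rightarrow> nat \<Rightarrow> real" where
  "completion I sch i = Inf {T. done_by I sch i T}"

definition valid_schedule :: "nat \<Rightarrow> task list \<Rightarrow> schedule \<Rightarrow> bool" where
  "valid_schedule p I sch \<longleftrightarrow>
     (\<forall>i < length I.
        (\<forall>s. 0 \<le> alloc sch i s) \<and>
        (\<forall>s. s < arr (I ! i) \<longrightarrow> alloc sch i s = 0) \<and>
        (\<forall>a b. alloc sch i integrable_on {a..b}) \<and>
        (\<not> choice sch i \<longrightarrow> (\<forall>s. alloc sch i s \<le> 1)) \<and>
        (\<exists>T. done_by I sch i T)) \<and>
     (\<forall>s. (\<Sum>i<length I. alloc sch i s) \<le> real p)"

definition awake :: "task list \<Rightarrow> schedule \<Rightarrow> real" where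
  "awake I sch = measure lborel (\<Union>i<length I. {arr (I ! i)..<completion I sch i})"

definition OPT :: "nat \<Rightarrow> task list \<Rightarrow> real" where
  "OPT p I = Inf (awake I ` {sch. valid_schedule p I sch})"

text \<open>Information available to a parallel-work-oblivious scheduler up to time t:
  which tasks have arrived, their arrival times and serial works, and which of
  them have completed (with completion times).  Never the parallel work.\<close>
definition obs_equal :: "task list \<Rightarrow> schedule \<Rightarrow> task list \<Rightarrow> schedule \<Rightarrow> real \<Rightarrow> bool" where
  "obs_equal I sch I' sch' t \<longleftrightarrow>
     (\<forall>i. (i < length I \<and> arr (I ! i) \<le> t) \<longleftrightarrow> (i < length I' \<and> arr (I' ! i) \<le> t)) \<and>
     (\<forall>i. i < length I \<and> arr (I ! i) \<le> t \<longrightarrow>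
          arr (I ! i) = arr (I' ! i) \<and> ser (I ! i) = ser (I' ! i) \<and>
          (completion I sch i \<le> t \<longleftrightarrow> completion I' sch' i \<le> t) \<and>
          (completion I sch i \<le> t \<longrightarrow> completion I sch i = completion I' sch' i))"

text \<open>A deterministic scheduler is a map from task arrival processes to schedules.
  It is valid if it always produces a valid schedule; it is online,
  decide-on-arrival and parallel-work-oblivious if whenever the observable
  information up to time t coincides for two processes, the implementation
  choices of all tasks arrived by time t coincide, and the allocations coincide
  on all times before t.\<close>
definition dao_pwo_scheduler :: "nat \<Rightarrow> (task list \<Rightarrow> schedule) \<Rightarrow> bool" where
  "dao_pwo_scheduler p S \<longleftrightarrow>
     (\<forall>I. valid_instance p I \<longrightarrow> valid_schedule p I (S I)) \<and>
     (\<forall>I I' t. valid_instance p I \<and> valid_instance p I' \<and> obs_equal I (S I) I' (S I') t \<longrightarrow>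
        (\<forall>i. i < length I \<and> arr (I ! i) \<le> t \<longrightarrow> choice (S I) i = choice (S I') i) \<and>
        (\<forall>i s. i < length I \<and> i < length I' \<and> s < t \<longrightarrow> alloc (S I) i s = alloc (S I') i s))"

end

theory Submission
  imports Defs
begin

lemma alloc_le_p:
  assumes "valid_schedule p I sch" "i < length I"
  shows "alloc sch i s \<le> real p"
proof -
  have nn: "\<forall>j\<in>{..<length I}. 0 \<le> alloc sch j s" using assms(1) unfolding valid_schedule_def by auto
  have "alloc sch i s \<le> (\<Sum>j<length I. alloc sch j s)"
    using assms(2) by (intro member_le_sum) (use nn in auto)
  also have "\<dots> \<le> real p" using assms(1) unfolding valid_schedule_def by auto
  finally show ?thesis .
qed

lemma done_bound:
  assumes "valid_schedule p I sch" "i < length I" "\<forall>s. alloc sch i s \<le> B"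
    "done_by I sch i T"
  shows "work I sch i \<le> B * (T - arr (I ! i))"
proof -
  have T: "arr (I ! i) \<le> T" and w: "work I sch i \<le> integral {arr (I ! i)..T} (alloc sch i)"
    using assms(4) unfolding done_by_def by auto
  have int: "alloc sch i integrable_on {arr (I ! i)..T}" using assms(1,2) unfolding valid_schedule_def by auto
  have "integral {arr (I ! i)..T} (alloc sch i) \<le> integral {arr (I ! i)..T} (\<lambda>_. B)"
    by (rule integral_le[OF int]) (use assms(3) in auto)
  also have "\<dots> = B * (T - arr (I ! i))" using T by simp
  finally show ?thesis using w by simp
qed

lemma completion_ge:
  assumes "valid_schedule p I sch" "i < length I" "\<forall>s. alloc sch i s \<le> B" "B > 0"
  shows "arr (I ! i) + work I sch i / B \<le> completion I sch i"
  unfolding completion_def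
proof (rule cInf_greatest)
  show "{T. done_by I sch i T} \<noteq> {}" using assms(1,2) unfolding valid_schedule_def by auto
  fix T assume "T \<in> {T. done_by I sch i T}"
  then have "work I sch i \<le> B * (T - arr (I ! i))" using done_bound[OF assms(1-3)] by auto
  then show "arr (I ! i) + work I sch i / B \<le> T" using assms(4) by (simp add: field_simps)
qed

lemma awake_zero:
  assumes "length I = n" "n \<ge> 1" "\<forall>i<n. arr (I ! i) = 0" "\<forall>i<n. 0 \<le> completion I sch i"
  shows "awake I sch = Max (completion I sch ` {..<n})"
proof -
  let ?M = "Max (completion I sch ` {..<n})"
  have "0 \<in> {..<n}" using assms(2) by simp
  then have ne: "completion I sch ` {..<n} \<noteq> {}" by blast
  have "(\<Union>i<n. {arr (I ! i)..<completion I sch i}) = {0..<?M}"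
  proof -
    have mx: "x < ?M \<longleftrightarrow> (\<exists>i<n. x < completion I sch i)" for x
      using Max_gr_iff[OF _ ne] by auto
    show ?thesis using assms(3) by (auto simp: mx)
  qed
  moreover have "0 \<le> ?M" using assms(2,4) ne by (auto simp: Max_ge_iff)
  ultimately show ?thesis unfolding awake_def assms(1) by simp
qed

lemma const_sched:
  fixes k w :: real
  assumes len: "length I = n" "n \<ge> 1" and a0: "\<forall>i<n. arr (I ! i) = 0"
    and sch: "sch = ((\<lambda>_. ch), (\<lambda>_ s. if 0 \<le> s then k else 0))"
    and wk: "\<forall>i<n. work I sch i = w" and w: "w > 0" and k: "k > 0" "\<not> ch \<longrightarrow> k \<le> 1"
    and nk: "real n * k \<le> real p"
  shows "valid_schedule p I sch \<and> awake I sch = w / k"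
proof -
  have al: "alloc sch i s = (if s \<in> {0..} then k else 0)" for i s
    using sch by (simp add: alloc_def)
  have ch: "choice sch i = ch" for i using sch by (simp add: choice_def)
  have intg: "alloc sch i integrable_on {a..b}" for i a b
    unfolding al[abs_def] integrable_restrict_Int by (simp add: integrable_const_ivl)
  have intv: "integral {0..T} (alloc sch i) = k * T" if "0 \<le> T" for i T
  proof -
    have "integral {0..T} (alloc sch i) = integral {0..T} (\<lambda>_. k)"
      by (rule integral_cong) (simp add: al)
    also have "\<dots> = k * T" using that by simp
    finally show ?thesis .
  qed
  have db: "done_by I sch i T \<longleftrightarrow> w / k \<le> T" if "i < n" for i T
  proof
    assume "done_by I sch i T"
    then have "0 \<le> T" "w \<le> k * T" using a0 that wk intv unfolding done_by_def by auto
    then show "w / k \<le> T" using k by (simp add: field_simps)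
  next
    assume "w / k \<le> T"
    moreover have "0 \<le> w / k" using w k by simp
    ultimately have T: "0 \<le> T" by linarith
    have "w \<le> k * T" using \<open>w / k \<le> T\<close> k by (simp add: field_simps)
    then show "done_by I sch i T" using a0 that wk intv[OF T] T
      unfolding done_by_def by auto
  qed
  have cp: "completion I sch i = w / k" if "i < n" for i
  proof -
    have "{T. done_by I sch i T} = {w/k..}" using db[OF that] by auto
    then show ?thesis unfolding completion_def by simp
  qed
  have S: "(\<Sum>i<length I. alloc sch i s) \<le> real p" for s
  proof -
    have "(\<Sum>i<length I. alloc sch i s) \<le> (\<Sum>i<length I. k)"
      by (rule sum_mono) (auto simp: al k less_imp_le)
    also have "\<dots> \<le> real p" using nk len by simp
    finally show ?thesis .
  qed
  have P: "(\<forall>s. 0 \<le> alloc sch i s) \<and> (\<forall>s<arr (I ! i). alloc sch i s = 0) \<and>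
     (\<forall>a b. alloc sch i integrable_on {a..b}) \<and>
     (\<not> choice sch i \<longrightarrow> (\<forall>s. alloc sch i s \<le> 1)) \<and> (\<exists>T. done_by I sch i T)"
    if i: "i < length I" for i
  proof (intro conjI)
    show "\<forall>s. 0 \<le> alloc sch i s" using k by (simp add: al)
    show "\<forall>s<arr (I ! i). alloc sch i s = 0" using a0 i len by (simp add: al)
    show "\<forall>a b. alloc sch i integrable_on {a..b}" using intg by blast
    show "\<not> choice sch i \<longrightarrow> (\<forall>s. alloc sch i s \<le> 1)" using k by (simp add: al ch)
    show "\<exists>T. done_by I sch i T" using db i len by blast
  qed
  have "valid_schedule p I sch"
    unfolding valid_schedule_def using S P by blast
  moreover have "awake I sch = w / k"
  proof -
    have "awake I sch = Max (completion I sch ` {..<n})"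
      by (rule awake_zero[OF len a0]) (use cp w k in simp)
    also have "completion I sch ` {..<n} = {w/k}" using cp len by force
    finally show ?thesis by simp
  qed
  ultimately show ?thesis by blast
qed

lemma OPT_le:
  assumes "valid_schedule p I sch"
  shows "OPT p I \<le> awake I sch"
  unfolding OPT_def
proof (rule cInf_lower)
  show "awake I sch \<in> awake I ` {sch. valid_schedule p I sch}" using assms by blast
  show "bdd_below (awake I ` {sch. valid_schedule p I sch})"
    by (rule bdd_belowI[where m=0]) (auto simp: awake_def)
qed

lemma awake_ge_total:
  assumes v: "valid_schedule p I sch" and len: "length I = n" "n \<ge> 1"
    and a0: "\<forall>i<n. arr (I ! i) = 0" and p: "p \<ge> 1"
    and W: "\<forall>i<n. work I sch i = W" "W > 0"
  shows "real n * W / real p \<le> awake I sch"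
proof -
  let ?M = "Max (completion I sch ` {..<n})"
  have pp: "real p > 0" using p by simp
  have cg: "0 \<le> completion I sch i" if "i < n" for i
  proof -
    have "arr (I ! i) + work I sch i / real p \<le> completion I sch i"
      by (rule completion_ge[OF v]) (use that len alloc_le_p[OF v] pp in simp_all)
    moreover have "arr (I ! i) = 0" "work I sch i = W" using a0 W that by auto
    moreover have "0 \<le> W / real p" using W pp by simp
    ultimately show ?thesis by (metis add.left_neutral order_trans)
  qed
  have aw: "awake I sch = ?M" by (rule awake_zero[OF len a0]) (use cg in auto)
  have intg: "alloc sch i integrable_on {a..b}" if "i < n" for i a b
    using v that len unfolding valid_schedule_def by auto
  have nn: "0 \<le> alloc sch i s" if "i < n" for i s
    using v that len unfolding valid_schedule_def by auto
  have key: "real n * W \<le> real p * (?M + e)" if e: "e > 0" for e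
  proof -
    have each: "W \<le> integral {0..?M + e} (alloc sch i)" if i: "i < n" for i
    proof -
      have ne: "{T. done_by I sch i T} \<noteq> {}" using v i len unfolding valid_schedule_def by auto
      have "completion I sch i \<le> ?M" using i by simp
      then have "Inf {T. done_by I sch i T} < ?M + e" using e unfolding completion_def by simp
      then obtain T where T: "done_by I sch i T" "T < ?M + e" using cInf_lessD[OF ne] by auto
      then have T0: "0 \<le> T" and wT: "W \<le> integral {0..T} (alloc sch i)"
        using a0 W i unfolding done_by_def by simp_all
      have "integral {0..T} (alloc sch i) \<le> integral {0..?M + e} (alloc sch i)"
        by (rule integral_subset_le) (use T(2) in \<open>simp_all add: intg[OF i] nn[OF i]\<close>)
      then show ?thesis using wT by simp
    qed
    have "real n * W = (\<Sum>i<n. W)" by simp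
    also have "\<dots> \<le> (\<Sum>i<n. integral {0..?M + e} (alloc sch i))"
      by (rule sum_mono) (use each in auto)
    also have "\<dots> = integral {0..?M + e} (\<lambda>s. \<Sum>i<n. alloc sch i s)"
      by (rule integral_sum[symmetric]) (use intg in auto)
    also have "\<dots> \<le> integral {0..?M + e} (\<lambda>s. real p)"
    proof (rule integral_le)
      show "(\<lambda>s. \<Sum>i<n. alloc sch i s) integrable_on {0..?M + e}"
        by (rule integrable_sum) (use intg in auto)
      show "(\<lambda>s. real p) integrable_on {0..?M + e}" by (rule integrable_const_ivl)
      have "\<forall>s. (\<Sum>i<length I. alloc sch i s) \<le> real p" using v unfolding valid_schedule_def by blast
      then show "\<And>s. s \<in> {0..?M + e} \<Longrightarrow> (\<Sum>i<n. alloc sch i s) \<le> real p" using len(1) by simp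
    qed
    also have "\<dots> = real p * (?M + e)"
    proof -
      have "completion I sch 0 \<le> ?M" using len(2) by simp
      then have "0 \<le> ?M" using cg[of 0] len(2) by linarith
      then show ?thesis using e by simp
    qed
    finally show ?thesis .
  qed
  have "real n * W / real p \<le> ?M"
  proof (rule field_le_epsilon)
    fix e :: real assume "e > 0"
    then have "real n * W \<le> real p * (?M + e)" by (rule key)
    then show "real n * W / real p \<le> ?M + e" using pp by (simp add: divide_le_eq mult.commute)
  qed
  then show ?thesis using aw by simp
qed

theorem proposition8p5:
  "\<exists>c>0. \<forall>p::nat. 1 \<le> p \<longrightarrow>
     (\<forall>S. dao_pwo_scheduler p S \<longrightarrow>
        (\<exists>I. valid_instance p I \<and> I \<noteq> [] \<and>
             c * sqrt (real p) * OPT p I \<le> awake I (S I)))"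
proof (intro exI[of _ "1/2"] conjI allI impI)
  show "(0::real) < 1/2" by simp
  fix p :: nat and S
  assume p: "1 \<le> p" and D: "dao_pwo_scheduler p S"
  have V: "\<And>I. valid_instance p I \<Longrightarrow> valid_schedule p I (S I)"
    using D unfolding dao_pwo_scheduler_def by blast
  have O: "\<And>I I' t. valid_instance p I \<Longrightarrow> valid_instance p I' \<Longrightarrow> obs_equal I (S I) I' (S I') t \<Longrightarrow>
        (\<forall>i. i < length I \<and> arr (I ! i) \<le> t \<longrightarrow> choice (S I) i = choice (S I') i)"
    using D unfolding dao_pwo_scheduler_def by blast
  define m where "m = nat \<lfloor>sqrt (real p)\<rfloor>"
  have sp1: "1 \<le> sqrt (real p)" using p by simp
  have fl1: "1 \<le> \<lfloor>sqrt (real p)\<rfloor>" using sp1 by (simp add: le_floor_iff)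
  have rm: "real m = of_int \<lfloor>sqrt (real p)\<rfloor>" using fl1 unfolding m_def by simp
  have m1: "m \<ge> 1" using fl1 unfolding m_def by linarith
  have mle: "real m \<le> sqrt (real p)" using rm by simp
  have mgt: "sqrt (real p) < real m + 1" using rm by linarith
  have sq: "sqrt (real p) * sqrt (real p) = real p" by simp
  have mp: "real m \<le> real p"
  proof -
    have "sqrt (real p) * 1 \<le> sqrt (real p) * sqrt (real p)" by (rule mult_left_mono[OF sp1]) simp
    then show ?thesis using mle sq by linarith
  qed
  have pp: "real p > 0" using p by simp
  define I1 :: "task list" where "I1 = replicate m (1, 1, 0)"
  define Ip :: "task list" where "Ip = replicate m (1, real p, 0)"
  have len: "length I1 = m" "length Ip = m" unfolding I1_def Ip_def by simp_all
  have I1n: "I1 ! i = (1,1,0)" if "i < m" for i using that unfolding I1_def by simp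
  have Ipn: "Ip ! i = (1,real p,0)" if "i < m" for i using that unfolding Ip_def by simp
  have a1: "\<forall>i<m. arr (I1 ! i) = 0" and ap: "\<forall>i<m. arr (Ip ! i) = 0"
    using I1n Ipn by (simp_all add: arr_def)
  have vi1: "valid_instance p I1" unfolding valid_instance_def I1_def
    using m1 p by (simp add: valid_task_def ser_def par_def arr_def)
  have vip: "valid_instance p Ip" unfolding valid_instance_def Ip_def
    using m1 p by (simp add: valid_task_def ser_def par_def arr_def)
  have vs1: "valid_schedule p I1 (S I1)" and vsp: "valid_schedule p Ip (S Ip)"
    using V vi1 vip by auto
  have w1: "work I1 sch i = 1" if "i < m" for sch i
    using I1n[OF that] by (simp add: work_def ser_def par_def)
  have wp: "1 \<le> work Ip sch i" if "i < m" for sch i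
    using Ipn[OF that] p by (simp add: work_def ser_def par_def)
  have cpos1: "0 < completion I1 (S I1) i" if i: "i < m" for i
  proof -
    have "arr (I1 ! i) + work I1 (S I1) i / real p \<le> completion I1 (S I1) i"
      by (rule completion_ge[OF vs1]) (use i len alloc_le_p[OF vs1] pp in simp_all)
    moreover have "0 < work I1 (S I1) i / real p" using w1[OF i] pp by simp
    ultimately show ?thesis using a1 i by simp
  qed
  have cposp: "0 < completion Ip (S Ip) i" if i: "i < m" for i
  proof -
    have "arr (Ip ! i) + work Ip (S Ip) i / real p \<le> completion Ip (S Ip) i"
      by (rule completion_ge[OF vsp]) (use i len alloc_le_p[OF vsp] pp in simp_all)
    moreover have "0 < work Ip (S Ip) i / real p" using wp[OF i, of "S Ip"] pp by simp
    ultimately show ?thesis using ap i by simp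
  qed
  have obs: "obs_equal I1 (S I1) Ip (S Ip) 0"
  proof -
    have nc1: "\<not> completion I1 (S I1) i \<le> 0" "\<not> completion Ip (S Ip) i \<le> 0" if "i < m" for i
      using cpos1[OF that] cposp[OF that] by simp_all
    show ?thesis
      unfolding obs_equal_def len using a1 ap nc1 I1n Ipn by (auto simp: ser_def arr_def)
  qed
  have ch: "choice (S I1) i = choice (S Ip) i" if "i < m" for i
    using O[OF vi1 vip obs] that len a1 by auto
  show "\<exists>I. valid_instance p I \<and> I \<noteq> [] \<and> 1 / 2 * sqrt (real p) * OPT p I \<le> awake I (S I)"
  proof (cases "\<exists>j<m. \<not> choice (S I1) j")
    case True
    then obtain j where j: "j < m" "\<not> choice (S I1) j" by blast
    have "arr (I1 ! j) + work I1 (S I1) j / 1 \<le> completion I1 (S I1) j"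
      by (rule completion_ge[OF vs1]) (use j len vs1 in \<open>auto simp: valid_schedule_def\<close>)
    then have cj: "1 \<le> completion I1 (S I1) j" using a1 w1 j by simp
    have "awake I1 (S I1) = Max (completion I1 (S I1) ` {..<m})"
      by (rule awake_zero[OF len(1) m1 a1]) (use cpos1 in \<open>auto intro: less_imp_le\<close>)
    also have "completion I1 (S I1) j \<le> \<dots>" using j by simp
    finally have aw: "1 \<le> awake I1 (S I1)" using cj by simp
    define sch1 :: schedule where "sch1 = ((\<lambda>_. True), (\<lambda>_ s. if 0 \<le> s then real p / real m else 0))"
    have "valid_schedule p I1 sch1 \<and> awake I1 sch1 = 1 / (real p / real m)"
    proof (rule const_sched[OF len(1) m1 a1 sch1_def])
      show "\<forall>i<m. work I1 sch1 i = 1" using w1 by simp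
    qed (use pp m1 in auto)
    then have opt: "OPT p I1 \<le> real m / real p" using OPT_le by fastforce
    have "1 / 2 * sqrt (real p) * OPT p I1 \<le> 1 / 2 * sqrt (real p) * (real m / real p)"
      by (rule mult_left_mono[OF opt]) simp
    also have "\<dots> \<le> 1 / 2"
    proof -
      have "sqrt (real p) * real m \<le> sqrt (real p) * sqrt (real p)"
        by (rule mult_left_mono[OF mle]) simp
      then have "sqrt (real p) * real m \<le> real p" using sq by simp
      then have "sqrt (real p) * (real m / real p) \<le> 1" using pp by (simp add: field_simps)
      then show ?thesis by simp
    qed
    finally have "1 / 2 * sqrt (real p) * OPT p I1 \<le> awake I1 (S I1)" using aw by simp
    moreover have "I1 \<noteq> []" using len m1 by auto
    ultimately show ?thesis using vi1 by blast
  next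
    case False
    then have cp: "choice (S Ip) i" if "i < m" for i using ch that by auto
    have wpp: "\<forall>i<m. work Ip (S Ip) i = real p"
      using cp Ipn by (simp add: work_def par_def)
    have "real m * real p / real p \<le> awake Ip (S Ip)"
      by (rule awake_ge_total[OF vsp len(2) m1 ap p wpp pp])
    then have aw: "real m \<le> awake Ip (S Ip)" using pp by simp
    define sch2 :: schedule where "sch2 = ((\<lambda>_. False), (\<lambda>_ s. if 0 \<le> s then 1 else 0))"
    have "valid_schedule p Ip sch2 \<and> awake Ip sch2 = 1 / 1"
    proof (rule const_sched[OF len(2) m1 ap sch2_def])
      show "\<forall>i<m. work Ip sch2 i = 1" using Ipn by (simp add: sch2_def work_def choice_def ser_def)
    qed (use mp in auto)
    then have opt: "OPT p Ip \<le> 1" using OPT_le by fastforce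
    have "1 / 2 * sqrt (real p) * OPT p Ip \<le> 1 / 2 * sqrt (real p) * 1"
      by (rule mult_left_mono[OF opt]) simp
    also have "\<dots> \<le> real m" using mgt m1 by simp
    finally have "1 / 2 * sqrt (real p) * OPT p Ip \<le> awake Ip (S Ip)" using aw by simp
    moreover have "Ip \<noteq> []" using len m1 by auto
    ultimately show ?thesis using vip by blast
  qed
qed

end
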